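(* Let $p$ be an odd prime, $q=p^m$, and let $N$ be a positive divisor of $p-1$ with $\gcd(N,\frac{q-1}{p-1})=1$. Let $\theta$ be a primitive $\frac{q-1}{N}$-th root of unity in $\mathbb{F}_q$. Then for any $c\in\mathbb{F}_q^*$, \[\sum_{\lambda\in\mathbb{F}_p^*}\sum_{i=0}^{\frac{q-1}{N}-1}\zeta_p^{\mathrm{Tr}_{q/p}(\lambda c\theta^i)}=-\frac{p-1}{N},\] and for any $a\in\mathbb{F}_q$, \[\sum_{\lambda\in\mathbb{F}_p^*}\sum_{i=0}^{\frac{q-1}{N}-1}\zeta_p^{\mathrm{Tr}_{q/p}(\lambda c\theta^i)}\eta(\lambda a\theta^i)=\frac{p-1}{N}\,\eta(ac)\sum_{x\in\mathbb{F}_q^*}\zeta_p^{\mathrm{Tr}_{q/p}(x)}\eta(x).\]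
   Context: $\zeta_p=e^{2\pi\mathrm{i}/p}$; $\mathrm{Tr}_{q/p}$ is the trace $\mathbb{F}_q\to\mathbb{F}_p$; $\eta$ is the quadratic character of $\mathbb{F}_q$ with $\eta(0)=0$. *)

theory Defs
  imports Complex_Main "HOL-Library.Cardinality" "HOL-Computational_Algebra.Primes"
begin

text \<open>The finite field F_q is modelled as a finite field type 'a with CARD('a) = p^m.
  The prime field F_p is the image of the naturals, of_nat ` {0..<p}.\<close>

definition trace_qp :: "nat \<Rightarrow> nat \<Rightarrow> 'a::field \<Rightarrow> 'a" where
  "trace_qp p m x = (\<Sum>j<m. x ^ (p ^ j))"

definition Fp_rep :: "nat \<Rightarrow> 'a::field \<Rightarrow> nat" where
  "Fp_rep p y = (THE k. k < p \<and> of_nat k = y)"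

definition zeta_pow :: "nat \<Rightarrow> 'a::field \<Rightarrow> complex" where
  "zeta_pow p y = exp (2 * pi * \<i> * of_nat (Fp_rep p y) / of_nat p)"

definition eta :: "'a::field \<Rightarrow> complex" where
  "eta x = (if x = 0 then 0 else if (\<exists>y. y ^ 2 = x) then 1 else -1)"

end

theory Submission
  imports Defs "HOL-Number_Theory.Number_Theory" "HOL-Computational_Algebra.Polynomial"
begin

lemma ff_pow_card: "(x::'a::{field,finite}) ^ CARD('a) = x"
proof (cases "x = 0")
  case False
  have "x * (\<Prod>y\<in>UNIV-{0}. x * y) = x * x ^ (card (UNIV :: 'a set) - 1) * \<Prod>(UNIV-{0})"
    by (simp add: prod.distrib mult_ac)
  also have "x * x ^ (card (UNIV :: 'a set) - 1) = x ^ Suc (card (UNIV :: 'a set) - 1)"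
    by (subst power_Suc) auto
  also have "Suc (card (UNIV :: 'a set) - 1) = card (UNIV :: 'a set)"
    using finite_UNIV_card_ge_0[where ?'a = 'a] by simp
  also have "(\<Prod>y\<in>UNIV-{0}. x * y) = (\<Prod>y\<in>UNIV-{0}. y)"
    by (rule prod.reindex_bij_witness[of _ "\<lambda>y. y / x" "\<lambda>y. x * y"]) (use False in auto)
  finally show ?thesis
    by simp
qed (use finite_UNIV_card_ge_0[where ?'a = 'a] in auto)

lemma ff_pow_card1: "(x::'a::{field,finite}) \<noteq> 0 \<Longrightarrow> x ^ (CARD('a) - 1) = 1"
proof -
  assume x: "x \<noteq> 0"
  have "x * x ^ (CARD('a) - 1) = x ^ Suc (CARD('a) - 1)" by (simp only: power_Suc)
  also have "Suc (CARD('a) - 1) = CARD('a)" using finite_UNIV_card_ge_0[where ?'a = 'a] by simp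
  finally have "x * x ^ (CARD('a) - 1) = x * 1" using ff_pow_card[of x] by simp
  thus ?thesis using x by simp
qed

lemma char_eq:
  assumes "prime p" "CARD('a::{field,finite}) = p ^ m"
  shows "CHAR('a) = p"
proof -
  have "prime CHAR('a)"
    by (intro prime_CHAR_semidom finite_imp_CHAR_pos) auto
  moreover have "CHAR('a) dvd p ^ m" using CHAR_dvd_CARD[where 'a='a] assms by simp
  hence "CHAR('a) dvd p" using \<open>prime CHAR('a)\<close> prime_dvd_power by blast
  ultimately show ?thesis using assms(1)
    using primes_dvd_imp_eq by blast
qed

lemma roots_bound:
  assumes "k > 0"
  shows "card {x::'a::field. x ^ k = c} \<le> k"
proof -
  define P where "P = monom (1::'a) k + [:-c:]"
  have deg: "degree P = k" unfolding P_def using assms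
    by (subst degree_add_eq_left) (auto simp: degree_monom_eq)
  hence "P \<noteq> 0" using assms by auto
  hence "card {x. poly P x = 0} \<le> degree P" by (rule card_poly_roots_bound)
  moreover have "{x. poly P x = 0} = {x. x ^ k = c}" by (auto simp: P_def poly_monom)
  ultimately show ?thesis using deg by simp
qed


context
  fixes p m :: nat
  assumes pr: "prime p" and card: "CARD('a::{field,finite}) = p ^ m" and m1: "m \<ge> 1"
begin

lemma charp: "CHAR('a) = p" using char_eq[OF pr card] .

lemma of_nat_eq_p: "((of_nat i)::'a) = of_nat j \<longleftrightarrow> [i = j] (mod p)"
  using of_nat_eq_iff_cong_CHAR[where 'a='a] charp by simp

lemma of_nat_p0: "(of_nat p :: 'a) = 0"
  using of_nat_CHAR[where 'a='a] charp by simp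

lemma Fp_H: "(of_nat ` {1..<p} :: 'a set) = {x. x ^ (p - 1) = 1}"
proof (rule card_subset_eq)
  show "finite {x::'a. x ^ (p - 1) = 1}" by simp
  show "of_nat ` {1..<p} \<subseteq> {x::'a. x ^ (p - 1) = 1}"
  proof
    fix x assume "x \<in> (of_nat ` {1..<p} :: 'a set)"
    then obtain k where k: "k \<in> {1..<p}" "x = of_nat k" by auto
    have "\<not> p dvd k" using k(1) by (auto dest: dvd_imp_le)
    hence "[k ^ (p - 1) = 1] (mod p)" using fermat_theorem[OF pr] by blast
    hence "(of_nat (k ^ (p - 1)) :: 'a) = of_nat 1" using of_nat_eq_p by blast
    thus "x \<in> {x::'a. x ^ (p - 1) = 1}" using k by simp
  qed
  have "inj_on (of_nat :: nat \<Rightarrow> 'a) {1..<p}"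
    by (auto simp: inj_on_def of_nat_eq_p cong_def)
  hence "card (of_nat ` {1..<p} :: 'a set) = p - 1" by (simp add: card_image)
  moreover have "card {x::'a. x ^ (p - 1) = 1} \<le> p - 1"
    using roots_bound[of "p - 1" "1::'a"] pr prime_gt_1_nat by simp
  moreover have "card (of_nat ` {1..<p} :: 'a set) \<le> card {x::'a. x ^ (p - 1) = 1}"
    by (rule card_mono) fact+
  ultimately show "card (of_nat ` {1..<p} :: 'a set) = card {x::'a. x ^ (p - 1) = 1}" by simp
qed

lemma Fp_all: "(y::'a) ^ p = y \<longleftrightarrow> y \<in> of_nat ` {..<p}"
proof -
  have "p > 1" using pr prime_gt_1_nat by blast
  hence p1: "p = Suc (p - 1)" by simp
  have "y ^ p = y \<longleftrightarrow> y = 0 \<or> y ^ (p - 1) = 1"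
  proof -
    have "y ^ p = y * y ^ (p - 1)" by (subst p1) simp
    thus ?thesis using pr prime_gt_1_nat by (auto simp: power_0_left)
  qed
  also have "\<dots> \<longleftrightarrow> y \<in> insert 0 (of_nat ` {1..<p})" using Fp_H by auto
  also have "insert 0 (of_nat ` {1..<p}) = (of_nat ` {..<p} :: 'a set)"
  proof -
    have "{..<p} = insert 0 {1..<p}" using prime_gt_1_nat[OF pr] by auto
    thus ?thesis by simp
  qed
  finally show ?thesis .
qed

lemma Fp_rep_of_nat: "k < p \<Longrightarrow> Fp_rep p (of_nat k :: 'a) = k"
  unfolding Fp_rep_def
  by (rule the_equality) (auto simp: of_nat_eq_p cong_def)

lemma zeta_of_nat: "zeta_pow p (of_nat k :: 'a) = exp (2 * pi * \<i> * of_nat k / of_nat p)"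
proof -
  have p0: "p > 0" using pr prime_gt_0_nat by blast
  have "(of_nat k :: 'a) = of_nat (k mod p)" by (simp add: of_nat_eq_p cong_def)
  hence "zeta_pow p (of_nat k :: 'a) = exp (2 * pi * \<i> * of_nat (k mod p) / of_nat p)"
    unfolding zeta_pow_def using Fp_rep_of_nat[of "k mod p"] p0 by simp
  also have "\<dots> = exp (2 * pi * \<i> * of_nat (k mod p) / of_nat p) * exp (2 * pi * \<i>) ^ (k div p)"
    by simp
  also have "exp (2 * pi * \<i>) ^ (k div p) = exp (of_nat (k div p) * (2 * pi * \<i>))"
    by (rule exp_of_nat_mult[symmetric])
  also have "exp (2 * pi * \<i> * of_nat (k mod p) / of_nat p) * \<dots>
      = exp (2 * pi * \<i> * of_nat (k mod p) / of_nat p + of_nat (k div p) * (2 * pi * \<i>))"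
    by (simp add: exp_add)
  also have "2 * pi * \<i> * of_nat (k mod p) / of_nat p + of_nat (k div p) * (2 * pi * \<i>)
      = 2 * pi * \<i> * (of_nat (k mod p) + of_nat p * of_nat (k div p)) / (of_nat p :: complex)"
    using p0 by (simp add: field_simps)
  also have "(of_nat (k mod p) + of_nat p * of_nat (k div p) :: complex) = of_nat k"
    by (metis of_nat_add of_nat_mult mod_mult_div_eq)
  finally show ?thesis .
qed

lemma zeta_add: "x \<in> of_nat ` UNIV \<Longrightarrow> y \<in> of_nat ` UNIV \<Longrightarrow>
   zeta_pow p (x + y :: 'a) = zeta_pow p x * zeta_pow p y"
proof -
  assume "x \<in> of_nat ` UNIV" "y \<in> of_nat ` UNIV"
  then obtain i j where ij: "x = of_nat i" "y = of_nat j" by auto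
  have "x + y = of_nat (i + j)" using ij by simp
  hence "zeta_pow p (x + y) = zeta_pow p (of_nat (i + j) :: 'a)" by simp
  also have "\<dots> = exp (2 * pi * \<i> * of_nat (i + j) / of_nat p)" by (rule zeta_of_nat)
  also have "\<dots> = exp (2 * pi * \<i> * of_nat i / of_nat p + 2 * pi * \<i> * of_nat j / of_nat p)"
    by (simp add: add_divide_distrib distrib_left)
  also have "\<dots> = zeta_pow p x * zeta_pow p y" using ij by (simp add: zeta_of_nat exp_add)
  finally show ?thesis .
qed

lemma zeta_ne1: "k < p \<Longrightarrow> k > 0 \<Longrightarrow> zeta_pow p (of_nat k :: 'a) \<noteq> 1"
proof
  assume k: "k < p" "k > 0" and e: "zeta_pow p (of_nat k :: 'a) = 1"
  have "exp (\<i> * complex_of_real (2 * pi * k / p)) = 1"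
    using e by (simp add: zeta_of_nat mult_ac)
  hence "cos (2 * pi * k / p) = 1"
    by (metis cis.sel(1) cis_conv_exp one_complex.sel(1))
  then obtain n :: int where n: "2 * pi * k / p = real_of_int n * 2 * pi" using cos_one_2pi_int by blast
  have p0: "real p > 0" using k by simp
  hence "real k = real_of_int n * real p" using n by (simp add: field_simps)
  hence "int k = n * int p" by (metis of_int_eq_iff of_int_mult of_int_of_nat_eq)
  hence "int p dvd int k" by simp
  thus False using k by (auto dest: dvd_imp_le)
qed

lemma primeCHAR: "prime CHAR('a::{field,finite})" using charp pr by simp

lemma tr_add: "trace_qp p m (x + y :: 'a::{field,finite}) = trace_qp p m x + trace_qp p m y"
  unfolding trace_qp_def sum.distrib[symmetric]
  by (rule sum.cong[OF refl]) (rule freshmans_dream'[OF primeCHAR], simp add: charp)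

lemma tr_0: "trace_qp p m (0 :: 'a::{field,finite}) = 0"
  unfolding trace_qp_def using prime_gt_0_nat[OF pr] by (auto intro!: sum.neutral simp: power_0_left)

lemma tr_Fp: "trace_qp p m (x :: 'a::{field,finite}) \<in> of_nat ` {..<p}"
proof -
  define g where "g j = x ^ (p ^ j)" for j
  have "(trace_qp p m x) ^ p = (\<Sum>j<m. (x ^ (p ^ j)) ^ p)"
    unfolding trace_qp_def by (rule freshmans_dream_sum[OF primeCHAR]) (simp add: charp)
  also have "\<dots> = (\<Sum>j<m. g (Suc j))" unfolding g_def by (simp add: power_mult[symmetric] mult.commute)
  also have "\<dots> = (\<Sum>j<m. g j)"
  proof -
    have "g 0 + (\<Sum>j<m. g (Suc j)) = (\<Sum>j<Suc m. g j)" by (rule sum.lessThan_Suc_shift[symmetric])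
    also have "\<dots> = (\<Sum>j<m. g j) + g m" by simp
    also have "g m = g 0" unfolding g_def using ff_pow_card[of x] card by simp
    finally show ?thesis by simp
  qed
  finally have "(trace_qp p m x) ^ p = trace_qp p m x" unfolding g_def trace_qp_def .
  thus ?thesis using Fp_all by blast
qed

lemma tr_nonzero: "\<exists>a::'a::{field,finite}. trace_qp p m a \<noteq> 0"
proof (rule ccontr)
  assume "\<not> ?thesis"
  hence all0: "\<And>a::'a. trace_qp p m a = 0" by blast
  define P where "P = (\<Sum>j<m. monom (1::'a) (p ^ j))"
  have p1: "p > 1" using prime_gt_1_nat[OF pr] .
  have polyP: "poly P x = trace_qp p m x" for x
    unfolding P_def trace_qp_def by (simp add: poly_sum poly_monom)
  have "coeff P (p ^ (m - 1)) = (\<Sum>j<m. if j = m - 1 then 1 else 0)"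
    unfolding P_def coeff_sum coeff_monom
    by (rule sum.cong[OF refl]) (use p1 in \<open>auto simp: power_inject_exp\<close>)
  also have "\<dots> = 1" using m1 by simp
  finally have "P \<noteq> 0" by auto
  hence "card {x. poly P x = 0} \<le> degree P" by (rule card_poly_roots_bound)
  also have "degree P \<le> p ^ (m - 1)"
    unfolding P_def
  proof (rule degree_sum_le)
    fix j assume "j \<in> {..<m}"
    hence "p ^ j \<le> p ^ (m - 1)" using p1 by (intro power_increasing) auto
    thus "degree (monom (1::'a) (p ^ j)) \<le> p ^ (m - 1)" using degree_monom_le le_trans by blast
  qed simp
  also have "p ^ (m - 1) < p ^ m" using p1 m1 by (intro power_strict_increasing) auto
  finally have "card {x. poly P x = 0} < CARD('a)" using card by simp
  moreover have "{x. poly P x = 0} = UNIV" using all0 polyP by auto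
  ultimately show False by simp
qed

lemma zeta_tr_add: "zeta_pow p (trace_qp p m (x + y :: 'a::{field,finite})) = zeta_pow p (trace_qp p m x) * zeta_pow p (trace_qp p m y)"
  unfolding tr_add using tr_Fp by (intro zeta_add) auto

lemma char_sum: "(\<Sum>x\<in>UNIV. zeta_pow p (trace_qp p m (x :: 'a::{field,finite}))) = 0"
proof -
  obtain a :: 'a where a: "trace_qp p m a \<noteq> 0" using tr_nonzero by blast
  obtain k where k: "k < p" "trace_qp p m a = of_nat k" using tr_Fp[of a] by auto
  have "k > 0" using a k by (cases k) auto
  hence za: "zeta_pow p (trace_qp p m a) \<noteq> 1" using zeta_ne1 k by simp
  define Z where "Z = (\<Sum>x\<in>UNIV. zeta_pow p (trace_qp p m (x :: 'a)))"
  have "Z = (\<Sum>x\<in>UNIV. zeta_pow p (trace_qp p m (x + a)))"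
    unfolding Z_def by (rule sum.reindex_bij_witness[of _ "\<lambda>y. y + a" "\<lambda>y. y - a"]) auto
  also have "\<dots> = Z * zeta_pow p (trace_qp p m a)"
    unfolding Z_def zeta_tr_add sum_distrib_right ..
  finally have "Z * (zeta_pow p (trace_qp p m a) - 1) = 0" by (simp add: algebra_simps)
  thus ?thesis using za unfolding Z_def by simp
qed

lemma char_sum_c: "(c::'a::{field,finite}) \<noteq> 0 \<Longrightarrow> (\<Sum>x\<in>UNIV - {0}. zeta_pow p (trace_qp p m (c * x))) = -1"
proof -
  assume c: "c \<noteq> 0"
  have "(\<Sum>x\<in>UNIV. zeta_pow p (trace_qp p m (c * x))) = (\<Sum>x\<in>UNIV. zeta_pow p (trace_qp p m (x :: 'a)))"
    by (rule sum.reindex_bij_witness[of _ "\<lambda>y. y / c" "\<lambda>y. c * y"]) (use c in auto)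
  also have "\<dots> = 0" by (rule char_sum)
  finally have s: "(\<Sum>x\<in>UNIV. zeta_pow p (trace_qp p m (c * x))) = 0" .
  have "(\<Sum>x\<in>UNIV. zeta_pow p (trace_qp p m (c * x))) = zeta_pow p (trace_qp p m (c * 0))
     + (\<Sum>x\<in>UNIV - {0}. zeta_pow p (trace_qp p m (c * x)))"
    by (rule sum.remove) auto
  moreover have "zeta_pow p (trace_qp p m (c * 0)) = 1"
    using zeta_of_nat[of 0] tr_0 by simp
  ultimately show ?thesis using s by (simp add: algebra_simps eq_neg_iff_add_eq_0)
qed

end




lemma root_nz: "(x::'a::field) ^ a = 1 \<Longrightarrow> a > 0 \<Longrightarrow> x \<noteq> 0"
  by (auto simp: power_0_left)

lemma fiber_card:
  fixes H T :: "'a::field set"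
  assumes H: "H = {x. x^a = 1}" and T: "T = {x. x^b = 1}" and a: "a > 0" and b: "b > 0"
    and l0: "l0 \<in> H" and t0: "t0 \<in> T"
  shows "card {z \<in> H \<times> T. fst z * snd z = l0 * t0} = card (H \<inter> T)"
proof -
  have l0z: "l0 \<noteq> 0" using l0 H a root_nz by blast
  have t0z: "t0 \<noteq> 0" using t0 T b root_nz by blast
  have "bij_betw (\<lambda>s. (l0 * s, t0 / s)) (H \<inter> T) {z \<in> H \<times> T. fst z * snd z = l0 * t0}"
  proof (rule bij_betw_byWitness[where f' = "\<lambda>z. fst z / l0"])
    show "\<forall>s\<in>H \<inter> T. fst (l0 * s, t0 / s) / l0 = s" using l0z by simp
    show "\<forall>z\<in>{z \<in> H \<times> T. fst z * snd z = l0 * t0}. (l0 * (fst z / l0), t0 / (fst z / l0)) = z"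
    proof
      fix z assume z: "z \<in> {z \<in> H \<times> T. fst z * snd z = l0 * t0}"
      have "fst z \<noteq> 0" using z H a by (auto simp: power_0_left)
      thus "(l0 * (fst z / l0), t0 / (fst z / l0)) = z" using z l0z
        by (cases z) (auto simp: field_simps)
    qed
    show "(\<lambda>s. (l0 * s, t0 / s)) ` (H \<inter> T) \<subseteq> {z \<in> H \<times> T. fst z * snd z = l0 * t0}"
    proof
      fix w assume "w \<in> (\<lambda>s. (l0 * s, t0 / s)) ` (H \<inter> T)"
      then obtain s where s: "s \<in> H \<inter> T" "w = (l0 * s, t0 / s)" by auto
      have "s \<noteq> 0" using s H a root_nz by auto
      thus "w \<in> {z \<in> H \<times> T. fst z * snd z = l0 * t0}"
        using s l0 t0 H T by (auto simp: power_mult_distrib power_divide)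
    qed
    show "(\<lambda>z. fst z / l0) ` {z \<in> H \<times> T. fst z * snd z = l0 * t0} \<subseteq> H \<inter> T"
    proof
      fix w assume "w \<in> (\<lambda>z. fst z / l0) ` {z \<in> H \<times> T. fst z * snd z = l0 * t0}"
      then obtain u v where uv: "u \<in> H" "v \<in> T" "u * v = l0 * t0" "w = u / l0" by auto
      have "v \<noteq> 0" using uv T b root_nz by auto
      hence w1: "w = t0 / v" using uv l0z by (auto simp: field_simps)
      have w2: "(t0 / v) ^ b = 1" using uv t0 T by (simp add: power_divide)
      have w3: "(u / l0) ^ a = 1" using uv l0 H by (simp add: power_divide)
      have "w \<in> H" unfolding H using w3 uv(4) by simp
      moreover have "w \<in> T" unfolding T using w2 w1 by simp
      ultimately show "w \<in> H \<inter> T" by blast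
    qed
  qed
  thus ?thesis by (rule bij_betw_same_card[symmetric])
qed

lemma sum_HT:
  fixes H T :: "'a::{field,finite} set" and f :: "'a \<Rightarrow> complex"
  assumes H: "H = {x. x^a = 1}" and T: "T = {x. x^b = 1}" and a: "a > 0" and b: "b > 0"
    and d: "card (H \<inter> T) = d"
    and cards: "card H * card T = d * card (UNIV - {0::'a})"
  shows "(\<Sum>l\<in>H. \<Sum>t\<in>T. f (l * t)) = of_nat d * (\<Sum>x\<in>UNIV - {0}. f x)"
proof -
  define A where "A = H \<times> T"
  define \<phi> where "\<phi> = (\<lambda>z::'a \<times> 'a. fst z * snd z)"
  define G where "G = (UNIV - {0::'a})"
  have "1 \<in> H \<inter> T" using H T by simp
  hence d0: "d > 0" using d card_gt_0_iff[of "H \<inter> T"] by auto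
  have fib: "card {z \<in> A. \<phi> z = y} = d" if "y \<in> \<phi> ` A" for y
  proof -
    from that obtain z where z: "z \<in> A" "y = \<phi> z" by blast
    obtain l0 t0 where lt: "l0 \<in> H" "t0 \<in> T" "y = l0 * t0" using z unfolding A_def \<phi>_def by (cases z) auto
    show ?thesis unfolding A_def \<phi>_def lt(3) using fiber_card[OF H T a b lt(1,2)] d by simp
  qed
  have imG: "\<phi> ` A \<subseteq> G"
  proof
    fix y assume "y \<in> \<phi> ` A"
    then obtain l t where lt: "l \<in> H" "t \<in> T" "y = l * t" unfolding A_def \<phi>_def by auto
    have "l \<noteq> 0" using lt(1) H a by (auto simp: power_0_left)
    moreover have "t \<noteq> 0" using lt(2) T b by (auto simp: power_0_left)
    ultimately show "y \<in> G" unfolding G_def using lt(3) by simp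
  qed
  have "card A = (\<Sum>z\<in>A. 1::nat)" by (rule card_eq_sum)
  also have "\<dots> = (\<Sum>y\<in>\<phi> ` A. \<Sum>z\<in>{z \<in> A. \<phi> z = y}. 1::nat)"
    by (rule sum.group[symmetric]) (auto simp: A_def)
  also have "\<dots> = (\<Sum>y\<in>\<phi> ` A. card {z \<in> A. \<phi> z = y})"
    by (simp only: card_eq_sum)
  also have "\<dots> = (\<Sum>y\<in>\<phi> ` A. d)" using fib by simp
  finally have "card A = card (\<phi> ` A) * d" by (simp only: sum_constant) simp
  moreover have "card A = d * card G" unfolding A_def G_def using cards by (simp add: card_cartesian_product)
  ultimately have "card (\<phi> ` A) = card G" using d0 by (simp add: mult.commute)
  hence imG': "\<phi> ` A = G" using imG by (intro card_subset_eq) auto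
  have "(\<Sum>l\<in>H. \<Sum>t\<in>T. f (l * t)) = (\<Sum>z\<in>A. f (\<phi> z))"
    unfolding A_def \<phi>_def sum.cartesian_product by (simp add: case_prod_beta)
  also have "\<dots> = (\<Sum>y\<in>G. \<Sum>z\<in>{z \<in> A. \<phi> z = y}. f (\<phi> z))"
    by (rule sum.group[symmetric]) (use imG in auto)
  also have "\<dots> = (\<Sum>y\<in>G. of_nat d * f y)"
  proof (rule sum.cong[OF refl])
    fix y assume "y \<in> G"
    hence "card {z \<in> A. \<phi> z = y} = d" using fib imG' by simp
    moreover have "(\<Sum>z\<in>{z \<in> A. \<phi> z = y}. f (\<phi> z)) = (\<Sum>z\<in>{z \<in> A. \<phi> z = y}. f y)" by simp
    ultimately show "(\<Sum>z\<in>{z \<in> A. \<phi> z = y}. f (\<phi> z)) = of_nat d * f y" by simp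
  qed
  finally show ?thesis unfolding G_def by (simp add: sum_distrib_left)
qed

context
  fixes p m :: nat
  assumes pr: "prime p" and card: "CARD('a::{field,finite}) = p ^ m" and m1: "m \<ge> 1" and oddp: "odd p"
begin

lemma two_nz: "(2::'a::{field,finite}) \<noteq> 0"
proof
  assume "(2::'a) = 0"
  hence "(of_nat 2::'a) = of_nat 0" by simp
  hence "[2 = 0] (mod p)" using of_nat_eq_p[OF pr card m1] by blast
  hence "p dvd 2" by (simp add: cong_0_iff)
  hence "p \<le> 2" by (auto dest: dvd_imp_le)
  moreover have "p \<ge> 2" using prime_ge_2_nat[OF pr] .
  ultimately have "p = 2" by simp
  thus False using oddp by simp
qed

lemma q_odd: "odd CARD('a::{field,finite})" using card oddp by simp

lemma q_ge3: "CARD('a::{field,finite}) \<ge> 3"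
proof -
  have "p \<ge> 3" using prime_ge_2_nat[OF pr] oddp by (cases "p = 2") auto
  moreover have "p \<le> p ^ m" using m1 prime_gt_0_nat[OF pr] by (simp add: self_le_power)
  ultimately show ?thesis using card by simp
qed

lemma sq_card: "card {x::'a::{field,finite}. x \<noteq> 0 \<and> (\<exists>y. y^2 = x)} * 2 = CARD('a) - 1"
proof -
  define S where "S = {x::'a. x \<noteq> 0 \<and> (\<exists>y. y^2 = x)}"
  define G where "G = (UNIV - {0::'a})"
  have img: "(\<lambda>y. y^2) ` G \<subseteq> S" unfolding G_def S_def by auto
  have fib: "card {y \<in> G. y^2 = x} = 2" if "x \<in> S" for x
  proof -
    have "x \<noteq> 0 \<and> (\<exists>y. y^2 = x)" using that S_def by simp
    then obtain y0 where y0': "x \<noteq> 0" "y0^2 = x" by blast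
    have y0: "y0 \<noteq> 0" "x = y0^2" using y0' by auto
    have "y \<in> {y \<in> G. y^2 = x} \<longleftrightarrow> y \<in> {y0, -y0}" for y
    proof -
      have "y^2 = y0^2 \<longleftrightarrow> y = y0 \<or> y = -y0" by (simp only: power2_eq_square square_eq_iff)
      moreover have "y \<in> {y \<in> G. y^2 = x} \<longleftrightarrow> y \<noteq> 0 \<and> y^2 = y0^2" unfolding G_def y0(2) by simp
      moreover have "y \<noteq> 0" if "y = y0 \<or> y = -y0" using that y0(1) by auto
      ultimately show ?thesis by blast
    qed
    hence "{y \<in> G. y^2 = x} = {y0, -y0}" by blast
    moreover have "y0 \<noteq> -y0"
    proof
      assume "y0 = -y0"
      hence "y0 + y0 = 0" using eq_neg_iff_add_eq_0 by blast
      hence "2 * y0 = 0" by (simp only: mult_2)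
      thus False using y0(1) two_nz by simp
    qed
    ultimately show ?thesis by simp
  qed
  have "card G = (\<Sum>y\<in>G. 1::nat)" by (rule card_eq_sum)
  also have "\<dots> = (\<Sum>x\<in>S. \<Sum>y\<in>{y \<in> G. y^2 = x}. 1::nat)"
    by (rule sum.group[symmetric]) (use img in auto)
  also have "\<dots> = (\<Sum>x\<in>S. card {y \<in> G. y^2 = x})" by (simp only: card_eq_sum)
  also have "\<dots> = (\<Sum>x\<in>S. 2)" using fib by simp
  finally have "card G = card S * 2" by (simp only: sum_constant) simp
  moreover have "card G = CARD('a) - 1" unfolding G_def by (simp add: card_Diff_subset)
  ultimately show ?thesis unfolding S_def by simp
qed

lemma S_roots: "{x::'a::{field,finite}. x \<noteq> 0 \<and> (\<exists>y. y^2 = x)} = {x. x ^ ((CARD('a) - 1) div 2) = 1}"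
proof (rule card_subset_eq)
  define h where "h = (CARD('a) - 1) div 2"
  have h2: "CARD('a) - 1 = 2 * h" unfolding h_def using q_odd by simp
  show "finite {x::'a. x ^ ((CARD('a) - 1) div 2) = 1}" by simp
  show "{x::'a. x \<noteq> 0 \<and> (\<exists>y. y^2 = x)} \<subseteq> {x. x ^ ((CARD('a) - 1) div 2) = 1}"
  proof
    fix x :: 'a assume "x \<in> {x::'a. x \<noteq> 0 \<and> (\<exists>y. y^2 = x)}"
    then obtain y where y: "y \<noteq> 0" "x = y^2" by auto
    have "x ^ h = y ^ (2 * h)" using y by (simp add: power_mult)
    also have "\<dots> = 1" using ff_pow_card1[OF y(1)] h2 by simp
    finally show "x \<in> {x. x ^ ((CARD('a) - 1) div 2) = 1}" unfolding h_def by simp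
  qed
  have "h > 0" using q_ge3 h2 by simp
  hence "card {x::'a. x ^ h = 1} \<le> h" by (rule roots_bound)
  moreover have "card {x::'a. x \<noteq> 0 \<and> (\<exists>y. y^2 = x)} = h" using sq_card h2 by simp
  moreover have "card {x::'a. x \<noteq> 0 \<and> (\<exists>y. y^2 = x)} \<le> card {x::'a. x ^ h = 1}"
    by (rule card_mono) (use \<open>_ \<subseteq> _\<close> in \<open>simp_all add: h_def\<close>)
  ultimately have "card {x::'a. x \<noteq> 0 \<and> (\<exists>y. y^2 = x)} = card {x::'a. x ^ h = 1}"
    by linarith
  thus "card {x::'a. x \<noteq> 0 \<and> (\<exists>y. y^2 = x)} = card {x::'a. x ^ ((CARD('a) - 1) div 2) = 1}"
    by (simp only: h_def)
qed

lemma eta_alt: "(x::'a::{field,finite}) \<noteq> 0 \<Longrightarrow> eta x = (if x ^ ((CARD('a) - 1) div 2) = 1 then 1 else -1)"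
  using S_roots unfolding eta_def by (auto simp: set_eq_iff)

lemma pm1: "(x::'a::{field,finite}) \<noteq> 0 \<Longrightarrow> x ^ ((CARD('a) - 1) div 2) = 1 \<or> x ^ ((CARD('a) - 1) div 2) = -1"
proof -
  assume x: "x \<noteq> 0"
  define h where "h = (CARD('a) - 1) div 2"
  have h2: "CARD('a) - 1 = 2 * h" unfolding h_def using q_odd by simp
  have "(x ^ h) * (x ^ h) = 1" using ff_pow_card1[OF x] h2 by (simp add: power_add[symmetric] mult_2)
  hence "(x ^ h - 1) * (x ^ h + 1) = 0" by (simp add: algebra_simps)
  hence "x ^ h = 1 \<or> x ^ h = -1" by (auto simp: eq_neg_iff_add_eq_0)
  thus ?thesis unfolding h_def .
qed

lemma eta_mult: "eta ((x::'a::{field,finite}) * y) = eta x * eta y"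
proof (cases "x = 0 \<or> y = 0")
  case True thus ?thesis by (auto simp: eta_def)
next
  case False
  hence x: "x \<noteq> 0" and y: "y \<noteq> 0" by auto
  define h where "h = (CARD('a) - 1) div 2"
  have ne: "(1::'a) \<noteq> -1" 
  proof
    assume "(1::'a) = -1"
    hence "(1::'a) + 1 = 0" by (simp add: eq_neg_iff_add_eq_0)
    thus False using two_nz by (simp add: one_add_one)
  qed
  have xy: "(x * y) ^ h = x ^ h * y ^ h" by (simp add: power_mult_distrib)
  have ex: "eta x = (if x ^ h = 1 then 1 else -1)" using eta_alt[OF x] by (simp only: h_def)
  have ey: "eta y = (if y ^ h = 1 then 1 else -1)" using eta_alt[OF y] by (simp only: h_def)
  have exy: "eta (x * y) = (if (x * y) ^ h = 1 then 1 else -1)" using eta_alt[of "x*y"] x y by (simp only: h_def) simp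
  have px: "x ^ h = 1 \<or> x ^ h = -1" using pm1[OF x] by (simp only: h_def)
  have py: "y ^ h = 1 \<or> y ^ h = -1" using pm1[OF y] by (simp only: h_def)
  from px py show ?thesis
  proof (elim disjE)
    assume "x ^ h = 1" "y ^ h = 1" thus ?thesis using ex ey exy xy by simp
  next
    assume "x ^ h = 1" "y ^ h = -1" thus ?thesis using ex ey exy xy ne by simp
  next
    assume "x ^ h = -1" "y ^ h = 1" thus ?thesis using ex ey exy xy ne by simp
  next
    assume "x ^ h = -1" "y ^ h = -1" thus ?thesis using ex ey exy xy ne by simp
  qed
qed

end

lemma pow_gcd1:
  assumes "(x::'a::field) ^ a = 1" "x ^ b = 1" "a > 0"
  shows "x ^ gcd a b = 1"
proof -
  obtain u v where uv: "a * u = b * v + gcd a b" using bezout_nat[of a b] assms(3) by auto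
  have "1 = (x ^ a) ^ u" using assms by simp
  also have "\<dots> = x ^ (b * v + gcd a b)" by (simp add: power_mult[symmetric] uv)
  also have "\<dots> = (x ^ b) ^ v * x ^ gcd a b" by (simp add: power_add power_mult)
  finally show ?thesis using assms by simp
qed

lemma dvd_pm1: "(p::nat) \<ge> 2 \<Longrightarrow> (p - 1) dvd (p ^ m - 1)"
proof -
  assume "p \<ge> 2"
  have "[p = 1] (mod (p - 1))" using \<open>p \<ge> 2\<close> by (simp add: cong_def mod_if le_mod_geq)
  hence "[p ^ m = 1 ^ m] (mod (p - 1))" by (rule cong_pow)
  hence "[p ^ m = 1] (mod (p - 1))" by simp
  thus ?thesis by (rule cong_to_1_nat)
qed

theorem corollary3:
  fixes p m N :: nat and \<theta> :: "'a::{field,finite}"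
  assumes "prime p" and "odd p" and "m \<ge> 1"
    and "CARD('a) = p ^ m"
    and "N > 0" and "N dvd (p - 1)"
    and "coprime N ((CARD('a) - 1) div (p - 1))"
    and "\<theta> ^ ((CARD('a) - 1) div N) = 1"
    and "\<forall>k. 0 < k \<and> k < (CARD('a) - 1) div N \<longrightarrow> \<theta> ^ k \<noteq> 1"
  shows "\<forall>c::'a. c \<noteq> 0 \<longrightarrow>
      (\<Sum>l\<in>of_nat ` {1..<p}. \<Sum>i<(CARD('a) - 1) div N.
          zeta_pow p (trace_qp p m (l * c * \<theta> ^ i)))
        = - (of_nat (p - 1) / of_nat N)
    \<and> (\<forall>a::'a.
      (\<Sum>l\<in>of_nat ` {1..<p}. \<Sum>i<(CARD('a) - 1) div N.
          zeta_pow p (trace_qp p m (l * c * \<theta> ^ i)) * eta (l * a * \<theta> ^ i))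
        = of_nat (p - 1) / of_nat N * eta (a * c) *
          (\<Sum>x\<in>UNIV - {0::'a}. zeta_pow p (trace_qp p m x) * eta x))"
proof -
  note pr = assms(1) and oddp = assms(2) and m1 = assms(3) and card = assms(4)
  define q where "q = CARD('a)"
  define n where "n = (q - 1) div N"
  define d where "d = (p - 1) div N"
  define M where "M = (q - 1) div (p - 1)"
  have p3: "p \<ge> 3" using prime_ge_2_nat[OF pr] oddp by (cases "p = 2") auto
  have Nd: "p - 1 = N * d" unfolding d_def using assms(6) by simp
  have pM: "q - 1 = (p - 1) * M" unfolding M_def q_def card using dvd_pm1[of p m] p3 by simp
  have nd: "n = d * M" unfolding n_def pM Nd using assms(5) by simp
  have qn: "q - 1 = N * n" unfolding nd pM Nd by simp
  have d0: "d > 0" using Nd p3 by (cases d) auto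
  have M0: "M > 0" using pM q_ge3[OF pr card m1 oddp] unfolding q_def by (cases M) auto
  have n0: "n > 0" using nd d0 M0 by simp
  have cop: "coprime N M" using assms(7) unfolding M_def q_def .
  have gcdd: "gcd (p - 1) n = d"
    unfolding Nd nd using cop by (simp add: gcd_mult_distrib_nat[symmetric] mult.commute[of N d])
  have th1: "\<theta> ^ n = 1" using assms(8) unfolding n_def q_def .
  have thmin: "\<And>k. 0 < k \<Longrightarrow> k < n \<Longrightarrow> \<theta> ^ k \<noteq> 1" using assms(9) unfolding n_def q_def by blast
  have thnz: "\<theta> \<noteq> 0" using th1 n0 by (auto simp: power_0_left)
  have thinj: "inj_on (\<lambda>i. \<theta> ^ i) {..<n}"
  proof (rule inj_onI)
    have aux: "i = j" if ij: "i \<le> j" "i < n" "j < n" "\<theta> ^ i = \<theta> ^ j" for i j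
    proof (rule ccontr)
      assume "i \<noteq> j"
      hence "0 < j - i" "j - i < n" using ij by auto
      moreover have "\<theta> ^ i * \<theta> ^ (j - i) = \<theta> ^ i * 1"
      proof -
        have "\<theta> ^ i * \<theta> ^ (j - i) = \<theta> ^ (i + (j - i))" by (simp only: power_add)
        also have "i + (j - i) = j" using ij by simp
        finally show ?thesis using ij by simp
      qed
      hence "\<theta> ^ (j - i) = 1" using thnz by simp
      ultimately show False using thmin by blast
    qed
    fix i j assume "i \<in> {..<n}" "j \<in> {..<n}" "\<theta> ^ i = \<theta> ^ j"
    thus "i = j" using aux[of i j] aux[of j i] by (cases "i \<le> j") auto
  qed
  define H where "H = {x::'a. x ^ (p - 1) = 1}"
  define T where "T = {x::'a. x ^ n = 1}"
  have HFp: "of_nat ` {1..<p} = H" unfolding H_def by (rule Fp_H[OF pr card m1])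
  have cardH: "card H = p - 1"
  proof -
    have "inj_on (of_nat :: nat \<Rightarrow> 'a) {1..<p}"
      by (auto simp: inj_on_def of_nat_eq_p[OF pr card m1] cong_def)
    thus ?thesis unfolding HFp[symmetric] by (simp add: card_image)
  qed
  have Tim: "T = (\<lambda>i. \<theta> ^ i) ` {..<n}"
  proof (rule card_subset_eq[symmetric])
    show "finite T" by simp
    show "(\<lambda>i. \<theta> ^ i) ` {..<n} \<subseteq> T" unfolding T_def
      by (auto simp: power_mult[symmetric] mult.commute[of _ n] power_mult th1)
    hence "card ((\<lambda>i. \<theta> ^ i) ` {..<n}) \<le> card T" by (intro card_mono) auto
    moreover have "card T \<le> n" unfolding T_def using roots_bound n0 by blast
    moreover have "card ((\<lambda>i. \<theta> ^ i) ` {..<n}) = n" using thinj by (simp add: card_image)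
    ultimately show "card ((\<lambda>i. \<theta> ^ i) ` {..<n}) = card T" by simp
  qed
  have cardT: "card T = n" unfolding Tim using thinj by (simp add: card_image)
  have HT1: "x ^ d = 1" if "x \<in> H \<inter> T" for x
  proof -
    have "x ^ (p - 1) = 1" "x ^ n = 1" using that unfolding H_def T_def by auto
    hence "x ^ gcd (p - 1) n = 1" using pow_gcd1[of x "p - 1" n] p3 by linarith
    thus ?thesis using gcdd by simp
  qed
  have HT2: "x \<in> H \<inter> T" if x: "x ^ d = 1" for x
  proof -
    have "x ^ (p - 1) = 1" unfolding Nd using x by (simp add: mult.commute[of N d] power_mult)
    moreover have "x ^ n = 1" unfolding nd using x by (simp add: power_mult)
    ultimately show ?thesis unfolding H_def T_def by simp
  qed
  have HT: "H \<inter> T = {x. x ^ d = 1}" using HT1 HT2 by blast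
  have cardHT: "card (H \<inter> T) = d"
  proof -
    have sub: "(\<lambda>i. \<theta> ^ (M * i)) ` {..<d} \<subseteq> {x. x ^ d = 1}"
    proof
      fix x assume "x \<in> (\<lambda>i. \<theta> ^ (M * i)) ` {..<d}"
      then obtain i where i: "x = \<theta> ^ (M * i)" by auto
      have "x ^ d = \<theta> ^ (n * i)" unfolding i nd by (simp add: power_mult[symmetric] mult_ac)
      also have "\<dots> = 1" by (simp add: power_mult th1)
      finally show "x \<in> {x. x ^ d = 1}" by simp
    qed
    have injd: "inj_on (\<lambda>i. \<theta> ^ (M * i)) {..<d}"
    proof (rule inj_onI)
      fix i j assume ij: "i \<in> {..<d}" "j \<in> {..<d}" "\<theta> ^ (M * i) = \<theta> ^ (M * j)"
      have "M * i < n" "M * j < n" using ij(1,2) M0 unfolding nd by (auto simp: mult.commute[of d M])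
      hence "M * i = M * j" using inj_onD[OF thinj ij(3)] by simp
      thus "i = j" using M0 by simp
    qed
    have "d = card ((\<lambda>i. \<theta> ^ (M * i)) ` {..<d})" using injd by (simp add: card_image)
    also have "\<dots> \<le> card {x::'a. x ^ d = 1}" using sub by (intro card_mono) auto
    finally have "d \<le> card {x::'a. x ^ d = 1}" .
    moreover have "card {x::'a. x ^ d = 1} \<le> d" using roots_bound d0 by blast
    ultimately show ?thesis unfolding HT by simp
  qed
  have cardG: "card (UNIV - {0::'a}) = q - 1" unfolding q_def by (simp add: card_Diff_subset)
  have cards: "card H * card T = d * card (UNIV - {0::'a})"
    unfolding cardH cardT cardG qn Nd nd by simp
  have p1pos: "p - 1 > 0" using p3 by simp
  have main: "(\<Sum>l\<in>of_nat ` {1..<p}. \<Sum>i<(CARD('a) - 1) div N. f (l * \<theta> ^ i))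
      = of_nat d * (\<Sum>x\<in>UNIV - {0}. f x)" for f :: "'a \<Rightarrow> complex"
  proof -
    have "(\<Sum>l\<in>of_nat ` {1..<p}. \<Sum>i<(CARD('a) - 1) div N. f (l * \<theta> ^ i))
        = (\<Sum>l\<in>H. \<Sum>t\<in>T. f (l * t))"
      unfolding HFp Tim n_def[symmetric] q_def[symmetric]
      by (rule sum.cong[OF refl]) (simp add: sum.reindex[OF thinj])
    also have "\<dots> = of_nat d * (\<Sum>x\<in>UNIV - {0}. f x)"
      by (rule sum_HT[OF H_def T_def p1pos n0 cardHT cards])
    finally show ?thesis .
  qed
  have dN: "(of_nat (p - 1) / of_nat N :: complex) = of_nat d"
    unfolding Nd using assms(5) by simp
  show ?thesis
  proof (intro allI impI conjI)
    fix c :: 'a assume c: "c \<noteq> 0"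
    have "(\<Sum>l\<in>of_nat ` {1..<p}. \<Sum>i<(CARD('a) - 1) div N.
          zeta_pow p (trace_qp p m (l * c * \<theta> ^ i)))
        = (\<Sum>l\<in>of_nat ` {1..<p}. \<Sum>i<(CARD('a) - 1) div N.
          zeta_pow p (trace_qp p m (c * (l * \<theta> ^ i))))" by (simp add: mult_ac)
    also have "\<dots> = of_nat d * (\<Sum>x\<in>UNIV - {0}. zeta_pow p (trace_qp p m (c * x)))"
      by (rule main)
    also have "\<dots> = - (of_nat (p - 1) / of_nat N)" using char_sum_c[OF pr card m1 c] dN by simp
    finally show "(\<Sum>l\<in>of_nat ` {1..<p}. \<Sum>i<(CARD('a) - 1) div N.
          zeta_pow p (trace_qp p m (l * c * \<theta> ^ i))) = - (of_nat (p - 1) / of_nat N)" .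
    fix a :: 'a
    have sq: "eta (inverse c * inverse c) = 1"
      using c unfolding eta_def by (auto simp: power2_eq_square)
    have etaeq: "eta (a * (y / c)) = eta (a * c) * eta y" for y
    proof -
      have "a * (y / c) = (a * c) * y * (inverse c * inverse c)" using c by (simp add: field_simps)
      thus ?thesis using sq by (simp add: eta_mult[OF pr card m1 oddp])
    qed
    have "(\<Sum>l\<in>of_nat ` {1..<p}. \<Sum>i<(CARD('a) - 1) div N.
          zeta_pow p (trace_qp p m (l * c * \<theta> ^ i)) * eta (l * a * \<theta> ^ i))
        = (\<Sum>l\<in>of_nat ` {1..<p}. \<Sum>i<(CARD('a) - 1) div N.
          zeta_pow p (trace_qp p m (c * (l * \<theta> ^ i))) * eta (a * (l * \<theta> ^ i)))"
      by (simp add: mult_ac)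
    also have "\<dots> = of_nat d * (\<Sum>x\<in>UNIV - {0}. zeta_pow p (trace_qp p m (c * x)) * eta (a * x))"
      by (rule main)
    also have "(\<Sum>x\<in>UNIV - {0}. zeta_pow p (trace_qp p m (c * x)) * eta (a * x))
        = (\<Sum>y\<in>UNIV - {0}. zeta_pow p (trace_qp p m y) * eta (a * (y / c)))"
      by (rule sum.reindex_bij_witness[of _ "\<lambda>y. y / c" "\<lambda>x. c * x"]) (use c in auto)
    also have "\<dots> = (\<Sum>y\<in>UNIV - {0::'a}. eta (a * c) * (zeta_pow p (trace_qp p m y) * eta y))"
      by (rule sum.cong[OF refl], simp only: etaeq, simp add: mult_ac)
    also have "\<dots> = eta (a * c) * (\<Sum>y\<in>UNIV - {0::'a}. zeta_pow p (trace_qp p m y) * eta y)"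
      by (simp add: sum_distrib_left)
    finally show "(\<Sum>l\<in>of_nat ` {1..<p}. \<Sum>i<(CARD('a) - 1) div N.
          zeta_pow p (trace_qp p m (l * c * \<theta> ^ i)) * eta (l * a * \<theta> ^ i))
        = of_nat (p - 1) / of_nat N * eta (a * c) *
          (\<Sum>x\<in>UNIV - {0::'a}. zeta_pow p (trace_qp p m x) * eta x)"
      using dN by (simp add: mult.assoc)
  qed
qed

end
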